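(* Let $n\ge 2$, $d\ge1$, $r\ge1$ be integers with $n\ge d$ and $dr\equiv0\pmod n$. Then $Q_n^-(d,r)\cong Q_n(d,r)$.
   Context: $\mathbb{Z}_2^n=\{0,1\}^n$ with coordinatewise addition mod 2; $e_i$ is the $i$-th standard basis vector, subscripts read modulo $n$. The recursive cube of rings $Q_n(d,r)$ (for $n\ge d$, $dr\equiv0\pmod n$) is the simple graph with vertex set $\mathbb{Z}_2^n\times\mathbb{Z}_r$ in which $(a,x)$ is adjacent to $(a+e_{i+dx},x)$ for $1\le i\le d$ and to $(a,x\pm1)$. The general recursive cube of rings $Q_n^-(d,r)$ is the simple graph with vertex set $\mathbb{Z}_2^n\times\{0,1,\dots,r-1\}$ in which $(a,x)$ and $(b,y)$ are adjacent iff either $a=b$ and $x\equiv y\pm1\pmod r$, or $x=y$ and $b=a+e_{i-dx}$ for some $1\le i\le d$. *)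

theory Defs
  imports Main
begin

text \<open>Elements of Z_2^n are represented as subsets of the coordinate set {0..<n}
  (coordinate k is 1 iff k is in the set); addition of the unit vector e_k is
  toggling coordinate k, with subscripts read modulo n. Elements of Z_r are
  represented by their residues 0..r-1.\<close>

definition flip :: "int set \<Rightarrow> int \<Rightarrow> int set" where
  "flip a k = (if k \<in> a then a - {k} else insert k a)"

definition unit_add :: "nat \<Rightarrow> int set \<Rightarrow> int \<Rightarrow> int set" where
  "unit_add n a i = flip a (i mod int n)"

definition cube_verts :: "nat \<Rightarrow> nat \<Rightarrow> (int set \<times> int) set" where
  "cube_verts n r = {(a, x). a \<subseteq> {0..<int n} \<and> 0 \<le> x \<and> x < int r}"

text \<open>Recursive cube of rings Q_n(d,r).\<close>
definition RCR_adj :: "nat \<Rightarrow> nat \<Rightarrow> nat \<Rightarrow> (int set \<times> int) \<Rightarrow> (int set \<times> int) \<Rightarrow> bool" where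
  "RCR_adj n d r u v \<longleftrightarrow> u \<noteq> v \<and>
     (let (a, x) = u; (b, y) = v in
       (x = y \<and> (\<exists>i\<in>{1..int d}. b = unit_add n a (i + int d * x))) \<or>
       (a = b \<and> (y = (x + 1) mod int r \<or> y = (x - 1) mod int r)))"

text \<open>General recursive cube of rings Q_n^-(d,r).\<close>
definition GRCR_adj :: "nat \<Rightarrow> nat \<Rightarrow> nat \<Rightarrow> (int set \<times> int) \<Rightarrow> (int set \<times> int) \<Rightarrow> bool" where
  "GRCR_adj n d r u v \<longleftrightarrow> u \<noteq> v \<and>
     (let (a, x) = u; (b, y) = v in
       (a = b \<and> (x mod int r = (y + 1) mod int r \<or> x mod int r = (y - 1) mod int r)) \<or>
       (x = y \<and> (\<exists>i\<in>{1..int d}. b = unit_add n a (i - int d * x))))"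

definition graph_iso :: "'a set \<Rightarrow> ('a \<Rightarrow> 'a \<Rightarrow> bool) \<Rightarrow> 'b set \<Rightarrow> ('b \<Rightarrow> 'b \<Rightarrow> bool) \<Rightarrow> bool" where
  "graph_iso V1 E1 V2 E2 \<longleftrightarrow>
     (\<exists>f. bij_betw f V1 V2 \<and> (\<forall>u\<in>V1. \<forall>v\<in>V1. E1 u v \<longleftrightarrow> E2 (f u) (f v)))"

end

theory Submission
  imports Defs
begin

lemma negmod_inj:
  fixes x y r :: int
  assumes "0 \<le> x" "x < r" "0 \<le> y" "y < r"
  shows "((-x) mod r = (-y) mod r) \<longleftrightarrow> x = y"
proof
  assume "(-x) mod r = (-y) mod r"
  then have "r dvd (-x - -y)" by (simp add: mod_eq_dvd_iff)
  then have "r dvd (y - x)" by simp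
  then obtain k where k: "y - x = r * k" by (auto simp: dvd_def)
  have "-r < r * k" using assms k by linarith
  have "r * k < r" using assms k by linarith
  have rp: "r > 0" using assms by simp
  have "k = 0"
  proof (rule ccontr)
    assume "k \<noteq> 0"
    then have "k \<ge> 1 \<or> k \<le> -1" by linarith
    then show False
    proof
      assume "k \<ge> 1" then have "r * k \<ge> r * 1" using rp by (intro mult_left_mono) auto
      then show False using \<open>r * k < r\<close> by simp
    next
      assume "k \<le> -1" then have "r * k \<le> r * (-1)" using rp by (intro mult_left_mono) auto
      then show False using \<open>-r < r * k\<close> by simp
    qed
  qed
  then show "x = y" using k by simp
qed simp

lemma ring1:
  fixes x y r :: int
  shows "((-y) mod r = ((-x) mod r + 1) mod r) \<longleftrightarrow> (x mod r = (y + 1) mod r)"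
proof -
  have "((-y) mod r = ((-x) mod r + 1) mod r) \<longleftrightarrow> ((-y) mod r = (-x + 1) mod r)"
    by (simp add: mod_add_left_eq)
  also have "\<dots> \<longleftrightarrow> r dvd (-y - (-x + 1))" by (simp add: mod_eq_dvd_iff)
  also have "\<dots> \<longleftrightarrow> r dvd (x - (y + 1))" by (smt (verit) dvd_minus_iff)
  also have "\<dots> \<longleftrightarrow> (x mod r = (y + 1) mod r)" by (simp add: mod_eq_dvd_iff)
  finally show ?thesis .
qed

lemma ring2:
  fixes x y r :: int
  shows "((-y) mod r = ((-x) mod r - 1) mod r) \<longleftrightarrow> (x mod r = (y - 1) mod r)"
proof -
  have "((-y) mod r = ((-x) mod r - 1) mod r) \<longleftrightarrow> ((-y) mod r = (-x - 1) mod r)"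
    by (simp add: mod_diff_left_eq)
  also have "\<dots> \<longleftrightarrow> r dvd (-y - (-x - 1))" by (simp add: mod_eq_dvd_iff)
  also have "\<dots> \<longleftrightarrow> r dvd (x - (y - 1))" by (smt (verit) dvd_minus_iff)
  also have "\<dots> \<longleftrightarrow> (x mod r = (y - 1) mod r)" by (simp add: mod_eq_dvd_iff)
  finally show ?thesis .
qed

lemma lvl:
  fixes i x r d n :: int
  assumes "n dvd d * r"
  shows "(i - d * x) mod n = (i + d * ((-x) mod r)) mod n"
proof -
  have "r dvd (x + (-x) mod r)"
    by (metis add.commute diff_minus_eq_add dvd_minus_iff mod_0_imp_dvd mod_diff_left_eq diff_self mod_0)
  then obtain k where k: "x + (-x) mod r = r * k" by (auto simp: dvd_def)
  have "n dvd d * r * k" using assms by simp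
  then have "n dvd ((i - d * x) - (i + d * ((-x) mod r)))"
  proof -
    have "(i - d * x) - (i + d * ((-x) mod r)) = - (d * (x + (-x) mod r))" by (simp add: algebra_simps)
    also have "\<dots> = - (d * r * k)" using k by simp
    finally show ?thesis using \<open>n dvd d * r * k\<close> by simp
  qed
  then show ?thesis by (simp add: mod_eq_dvd_iff)
qed

theorem mainTheorem4:
  fixes n d r :: nat
  assumes "n \<ge> 2" and "d \<ge> 1" and "r \<ge> 1" and "n \<ge> d" and "(d * r) mod n = 0"
  shows "graph_iso (cube_verts n r) (GRCR_adj n d r) (cube_verts n r) (RCR_adj n d r)"
proof -
  define f :: "int set \<times> int \<Rightarrow> int set \<times> int" where "f = (\<lambda>(a,x). (a, (-x) mod int r))"
  have dv: "int n dvd int d * int r" using assms(5)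
    by (metis dvd_imp_mod_0 mod_0_imp_dvd of_nat_dvd_iff of_nat_mult)
  have rp: "int r > 0" using assms by simp
  have inV: "f u \<in> cube_verts n r" if "u \<in> cube_verts n r" for u
    using that rp by (auto simp: f_def cube_verts_def)
  have inv: "f (f u) = u" if "u \<in> cube_verts n r" for u
    using that rp by (auto simp: f_def cube_verts_def mod_minus_eq)
  have bij: "bij_betw f (cube_verts n r) (cube_verts n r)"
    by (rule bij_betw_byWitness[where f'=f]) (use inV inv in auto)
  have E: "GRCR_adj n d r u v \<longleftrightarrow> RCR_adj n d r (f u) (f v)"
    if u: "u \<in> cube_verts n r" and v: "v \<in> cube_verts n r" for u v
  proof -
    obtain a x where ax: "u = (a,x)" by fastforce
    obtain b y where bv: "v = (b,y)" by fastforce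
    have xr: "0 \<le> x" "x < int r" "0 \<le> y" "y < int r" using u v ax bv by (auto simp: cube_verts_def)
    have ne: "(u \<noteq> v) \<longleftrightarrow> (f u \<noteq> f v)" using inv u v by metis
    have xy: "((-x) mod int r = (-y) mod int r) \<longleftrightarrow> x = y" using negmod_inj xr by blast
    have lv: "\<And>i. unit_add n a (i - int d * x) = unit_add n a (i + int d * ((-x) mod int r))"
      unfolding unit_add_def using lvl[OF dv] by metis
    have fu: "f u = (a, (-x) mod int r)" "f v = (b, (-y) mod int r)" using ax bv by (auto simp: f_def)
    show ?thesis
      unfolding GRCR_adj_def RCR_adj_def fu Let_def
      using ne xy lv ring1[of y "int r" x] ring2[of y "int r" x]
      unfolding ax bv fu by auto
  qed
  show ?thesis unfolding graph_iso_def using bij E by blast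
qed

end
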